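(* Let $A\in\mathbb{R}^{n\times n}$ be symmetric, with Moore–Penrose pseudoinverse $A^\dagger$, and let $\|\cdot\|$ be the Frobenius norm. (i) The problem $\min_X \tfrac12\|X\|^2$ subject to $AXA=A$ is equivalent to (has the same $X$-solution as) $\min_{\Gamma,X}\tfrac12\|A^\dagger - X\|^2$ subject to $X = A\Gamma A$. (ii) For any $X_k\in\mathbb{R}^{n\times n}$ and $S\in\mathbb{R}^{n\times\tau}$, the problem $$X_{k+1}=\arg\min_X \tfrac12\|X-X_k\|^2\quad\text{subject to}\quad S^\top A X A S = S^\top A S$$ is equivalent to (has the same $X$-solution as) $\min_{\Gamma,X}\tfrac12\|X-A^\dagger\|^2$ subject to $X = X_k + AS\Gamma S^\top A$. (iii) The solution of the problem in (ii) is $$X_{k+1} = X_k + AS(S^\top A^2 S)^\dagger S^\top (A - A X_k A) S (S^\top A^2 S)^\dagger S^\top A.$$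
   Context: $M^\dagger$ denotes the Moore–Penrose pseudoinverse of a real matrix $M$; $\|X\|=\sqrt{\mathrm{Tr}(X^\top X)}$. *)

theory Defs
  imports "HOL-Analysis.Analysis"
begin

definition mp_pinv :: "real^'m^'n \<Rightarrow> real^'n^'m" where
  "mp_pinv A = (THE X. A ** X ** A = A \<and> X ** A ** X = X \<and>
                      transpose (A ** X) = A ** X \<and> transpose (X ** A) = X ** A)"

definition frob :: "real^'m^'n \<Rightarrow> real" where
  "frob X = sqrt (trace (transpose X ** X))"

end

theory Submission
  imports Defs
begin


lemma proj_exists:
  fixes V :: "(real^'n) set"
  assumes sV: "subspace V"
  obtains P :: "real^'n^'n" where "\<And>x. P *v x \<in> V" "\<And>x v. v \<in> V \<Longrightarrow> (x - P *v x) \<bullet> v = 0"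
proof -
  have "\<exists>y z. y \<in> span V \<and> (\<forall>w\<in>span V. orthogonal z w) \<and> x = y + z" for x
    by (metis orthogonal_subspace_decomp_exists)
  then obtain p1 p2 where p1: "\<And>x. p1 x \<in> V" and o: "\<And>x w. w \<in> V \<Longrightarrow> orthogonal (p2 x) w"
      and eq: "\<And>x. x = p1 x + p2 x"
    using span_eq_iff sV by metis
  have o1: "(x - p1 x) \<bullet> v = 0" if "v \<in> V" for x v
    using o[OF that, of x] eq[of x] by (metis add_diff_cancel_left' orthogonal_def)
  have uniq: "a = p1 x" if "a \<in> V" "\<And>v. v \<in> V \<Longrightarrow> (x - a) \<bullet> v = 0" for a x
  proof -
    have d: "p1 x - a \<in> V" using p1 that(1) sV subspace_diff by blast
    have "(p1 x - a) \<bullet> (p1 x - a) = (x - a) \<bullet> (p1 x - a) - (x - p1 x) \<bullet> (p1 x - a)"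
      by (simp add: inner_diff_left)
    also have "\<dots> = 0" using that(2)[OF d] o1[OF d] by simp
    finally show ?thesis by simp
  qed
  have lin: "linear p1"
  proof (rule linearI)
    fix x y
    show "p1 (x + y) = p1 x + p1 y"
    proof (rule uniq[symmetric])
      show "p1 x + p1 y \<in> V" by (simp add: p1 sV subspace_add)
      fix v assume "v \<in> V"
      have "(x + y - (p1 x + p1 y)) \<bullet> v = (x - p1 x) \<bullet> v + (y - p1 y) \<bullet> v"
        by (simp add: algebra_simps inner_diff_left inner_add_left)
      then show "(x + y - (p1 x + p1 y)) \<bullet> v = 0" using o1[OF \<open>v \<in> V\<close>] by simp
    qed
  next
    fix c :: real and x
    show "p1 (c *\<^sub>R x) = c *\<^sub>R p1 x"
    proof (rule uniq[symmetric])
      show "c *\<^sub>R p1 x \<in> V" by (simp add: p1 sV subspace_scale)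
      fix v assume "v \<in> V"
      have "(c *\<^sub>R x - c *\<^sub>R p1 x) \<bullet> v = c * ((x - p1 x) \<bullet> v)"
        by (simp add: algebra_simps inner_diff_left)
      then show "(c *\<^sub>R x - c *\<^sub>R p1 x) \<bullet> v = 0" using o1[OF \<open>v \<in> V\<close>] by simp
    qed
  qed
  show ?thesis
    by (rule that[of "matrix p1"]) (simp_all add: matrix_works lin linear_matrix_vector_mul_eq p1 o1)
qed

lemma inner_mat: "(A *v u) \<bullet> y = u \<bullet> (transpose A *v (y::real^'n))" for A :: "real^'m^'n"
  by (metis dot_lmul_matrix inner_commute transpose_matrix_vector)

lemma sym_from_inner:
  fixes Q :: "real^'n^'n"
  assumes "\<And>u v. (Q *v u) \<bullet> v = u \<bullet> (Q *v v)"
  shows "transpose Q = Q"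
proof (subst matrix_eq, intro allI)
  fix v
  define d where "d = transpose Q *v v - Q *v v"
  have "d \<bullet> u = 0" for u
    using inner_mat[of "transpose Q" v u] assms[of v u]
    by (simp add: d_def inner_diff_right inner_commute)
  from this[of d] show "transpose Q *v v = Q *v v" by (simp add: d_def)
qed

lemma pinv_exists:
  fixes A :: "real^'m^'n"
  shows "\<exists>X. A ** X ** A = A \<and> X ** A ** X = X \<and> transpose (A ** X) = A ** X \<and> transpose (X ** A) = X ** A"
proof -
  have sV: "subspace (range (\<lambda>x. A *v x))"
    by (rule linear_subspace_image[OF matrix_vector_mul_linear subspace_UNIV])
  have sW: "subspace (range (\<lambda>x. transpose A *v x))"
    by (rule linear_subspace_image[OF matrix_vector_mul_linear subspace_UNIV])
  obtain PV :: "real^'n^'n" where PV1: "\<And>x. PV *v x \<in> range (\<lambda>x. A *v x)"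
    and PV2: "\<And>x v. v \<in> range (\<lambda>x. A *v x) \<Longrightarrow> (x - PV *v x) \<bullet> v = 0"
    using proj_exists[OF sV] by blast
  obtain PW :: "real^'m^'m" where PW1: "\<And>x. PW *v x \<in> range (\<lambda>x. transpose A *v x)"
    and PW2: "\<And>x v. v \<in> range (\<lambda>x. transpose A *v x) \<Longrightarrow> (x - PW *v x) \<bullet> v = 0"
    using proj_exists[OF sW] by blast
  let ?W = "range (\<lambda>x. transpose A *v x)"
  have spW: "span ?W = ?W" using sW span_eq_iff by blast
  have kerW: "A *v u = 0" if "\<And>v. v \<in> ?W \<Longrightarrow> u \<bullet> v = 0" for u
  proof -
    have "(A *v u) \<bullet> y = 0" for y using that[of "transpose A *v y"] inner_mat[of A u y] by simp
    from this[of "A *v u"] show ?thesis by simp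
  qed
  have APW: "A *v (PW *v x) = A *v x" for x
  proof -
    have "A *v (x - PW *v x) = 0" by (rule kerW) (rule PW2)
    then show ?thesis by (simp add: matrix_vector_mult_diff_distrib)
  qed
  have PWfix: "PW *v w = w" if "w \<in> ?W" for w
  proof -
    have d: "w - PW *v w \<in> ?W" using that PW1 sW subspace_diff by blast
    have "(w - PW *v w) \<bullet> (w - PW *v w) = 0" by (rule PW2[OF d])
    then show ?thesis by simp
  qed
  have PVfix: "PV *v w = w" if "w \<in> range (\<lambda>x. A *v x)" for w
  proof -
    have d: "w - PV *v w \<in> range (\<lambda>x. A *v x)" using that PV1 sV subspace_diff by blast
    have "(w - PV *v w) \<bullet> (w - PV *v w) = 0" by (rule PV2[OF d])
    then show ?thesis by simp
  qed
  have inj: "inj_on (\<lambda>x. A *v x) (span ?W)"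
  proof (rule inj_onI)
    fix a b assume a: "a \<in> span ?W" and b: "b \<in> span ?W" and e: "A *v a = A *v b"
    have "a - b \<in> ?W" using a b spW sW subspace_diff by metis
    then obtain y where y: "a - b = transpose A *v y" by blast
    have "(a - b) \<bullet> (a - b) = (A *v (a - b)) \<bullet> y"
      using inner_mat[of A "a - b" y] y by (simp add: inner_commute)
    also have "\<dots> = 0" using e by (simp add: matrix_vector_mult_diff_distrib)
    finally show "a = b" by simp
  qed
  obtain g where gW: "range g \<subseteq> span ?W" and lg: "linear g" and gA: "\<And>x. x \<in> span ?W \<Longrightarrow> g (A *v x) = x"
    using linear_inj_on_left_inverse[OF _ inj] by (auto simp: matrix_vector_mul_linear)
  have g1: "g (A *v x) = PW *v x" for x
    by (metis APW PW1 gA span_base)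
  have g2: "A *v g (PV *v y) = PV *v y" for y
  proof -
    obtain z where z: "PV *v y = A *v z" using PV1[of y] by blast
    show ?thesis unfolding z g1 APW ..
  qed
  have gWin: "g y \<in> ?W" for y using gW spW by blast
  define X where "X = matrix (g \<circ> (\<lambda>y. PV *v y))"
  have linc: "linear (g \<circ> (\<lambda>y. PV *v y))"
    using lg by (simp add: linear_compose matrix_vector_mul_linear)
  have Xv: "X *v y = g (PV *v y)" for y
    unfolding X_def using matrix_works[of "g \<circ> (\<lambda>y. PV *v y)"] linc
    by (simp add: linear_matrix_vector_mul_eq)
  have AX: "A ** X = PV"
    by (simp add: matrix_eq matrix_vector_mul_assoc[symmetric] Xv g2)
  have XA: "X ** A = PW"
    by (simp add: matrix_eq matrix_vector_mul_assoc[symmetric] Xv PVfix g1)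
  have PVsym: "transpose PV = PV"
  proof (rule sym_from_inner)
    fix u v
    have "(PV *v u) \<bullet> v = (PV *v u) \<bullet> (PV *v v)"
      using PV2[OF PV1[of u], of v] by (simp add: inner_diff_left inner_diff_right inner_commute)
    also have "\<dots> = u \<bullet> (PV *v v)"
      using PV2[OF PV1[of v], of u] by (simp add: inner_diff_left inner_diff_right inner_commute)
    finally show "(PV *v u) \<bullet> v = u \<bullet> (PV *v v)" .
  qed
  have PWsym: "transpose PW = PW"
  proof (rule sym_from_inner)
    fix u v
    have "(PW *v u) \<bullet> v = (PW *v u) \<bullet> (PW *v v)"
      using PW2[OF PW1[of u], of v] by (simp add: inner_diff_left inner_diff_right inner_commute)
    also have "\<dots> = u \<bullet> (PW *v v)"
      using PW2[OF PW1[of v], of u] by (simp add: inner_diff_left inner_diff_right inner_commute)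
    finally show "(PW *v u) \<bullet> v = u \<bullet> (PW *v v)" .
  qed
  have "A ** X ** A = A"
    by (simp add: matrix_eq XA matrix_vector_mul_assoc[symmetric] matrix_mul_assoc[symmetric] APW)
  moreover have "X ** A ** X = X"
    using PWfix[OF gWin] by (simp add: matrix_eq XA matrix_vector_mul_assoc[symmetric] Xv)
  ultimately show ?thesis using AX XA PVsym PWsym by blast
qed

lemma mm_add_rdistrib: "((A::'a::semiring_1^'n^'m) + B) ** C = A ** C + B ** C"
  by (vector matrix_matrix_mult_def sum.distrib[symmetric] field_simps)
lemma mm_sub_rdistrib: "((A::'a::ring_1^'n^'m) - B) ** C = A ** C - B ** C"
  by (vector matrix_matrix_mult_def sum_subtractf[symmetric] field_simps)
lemma mm_sub_ldistrib: "(A::'a::ring_1^'n^'m) ** (B - C) = A ** B - A ** C"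
  by (vector matrix_matrix_mult_def sum_subtractf[symmetric] field_simps)
lemma transpose_add: "transpose ((A::'a::semiring_1^'n^'m) + B) = transpose A + transpose B"
  by (simp add: transpose_def vec_eq_iff)
lemma transpose_diff: "transpose ((A::'a::ring_1^'n^'m) - B) = transpose A - transpose B"
  by (simp add: transpose_def vec_eq_iff)
lemma transpose_zero: "transpose (0::'a::semiring_1^'n^'m) = 0"
  by (simp add: transpose_def vec_eq_iff)
lemma trace_transpose: "trace (transpose (A::'a::semiring_1^'n^'n)) = trace A"
  by (simp add: trace_def transpose_def)

definition nsq :: "real^'m^'n \<Rightarrow> real" where "nsq X = trace (transpose X ** X)"

lemma nsq_sum: "nsq X = (\<Sum>i\<in>UNIV. \<Sum>k\<in>UNIV. (X$k$i)^2)"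
  by (simp add: nsq_def trace_def matrix_matrix_mult_def transpose_def power2_eq_square)

lemma nsq_nonneg: "nsq X \<ge> 0"
  by (simp add: nsq_sum sum_nonneg)

lemma nsq_eq_0: "nsq X = 0 \<longleftrightarrow> X = 0"
proof
  assume "nsq X = 0"
  then have "\<forall>i. (\<Sum>k\<in>UNIV. (X$k$i)^2) = 0"
    unfolding nsq_sum by (subst (asm) sum_nonneg_eq_0_iff) (auto intro: sum_nonneg)
  then have "\<forall>i k. X$k$i = 0"
    by (subst (asm) sum_nonneg_eq_0_iff) auto
  then show "X = 0" by (simp add: vec_eq_iff)
qed (simp add: nsq_sum)

lemma frob_sq: "frob X ^ 2 = nsq X"
  using nsq_nonneg[of X] by (simp add: frob_def nsq_def)

lemma nsq_add: "nsq (U + V) = nsq U + nsq V + 2 * trace (transpose U ** (V::real^'m^'n))"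
proof -
  have "trace (transpose V ** U) = trace (transpose U ** V)"
    by (metis matrix_transpose_mul trace_transpose transpose_transpose)
  then show ?thesis
    by (simp add: nsq_def transpose_add matrix_add_ldistrib mm_add_rdistrib trace_add)
qed

lemma orth:
  fixes B :: "real^'t^'n" and E :: "real^'n^'n"
  assumes "transpose B ** E ** C = 0"
  shows "trace (transpose E ** (B ** H ** transpose C)) = 0"
proof -
  have "trace (transpose E ** (B ** H ** transpose C)) = trace ((transpose E ** B ** H) ** transpose C)"
    by (simp add: matrix_mul_assoc)
  also have "\<dots> = trace (transpose C ** (transpose E ** B ** H))" by (rule trace_mul_sym)
  also have "\<dots> = trace (transpose (transpose B ** E ** C) ** H)"
    by (simp add: matrix_mul_assoc matrix_transpose_mul)
  also have "\<dots> = 0" by (simp add: assms transpose_zero trace_def)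
  finally show ?thesis .
qed

lemma argmin_gen:
  assumes "P q" "\<And>p. P p \<Longrightarrow> f p = f q + h p" "\<And>p. P p \<Longrightarrow> h p \<ge> (0::real)"
  shows "is_arg_min f P p \<longleftrightarrow> P p \<and> h p = 0"
  unfolding is_arg_min_def using assms by (smt (verit))

definition pen :: "real^'m^'n \<Rightarrow> real^'n^'m \<Rightarrow> bool" where
  "pen A X \<longleftrightarrow> A ** X ** A = A \<and> X ** A ** X = X \<and> transpose (A ** X) = A ** X \<and> transpose (X ** A) = X ** A"

lemma pen_unique:
  assumes "pen A X" "pen A Y" shows "X = Y"
proof -
  from assms have x1: "A ** X ** A = A" and x2: "X ** A ** X = X" and x3: "transpose (A ** X) = A ** X"
    and x4: "transpose (X ** A) = X ** A" and y1: "A ** Y ** A = A" and y2: "Y ** A ** Y = Y"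
    and y3: "transpose (A ** Y) = A ** Y" and y4: "transpose (Y ** A) = Y ** A"
    by (auto simp: pen_def)
  have "X = X ** (A ** X)" using x2 by (simp add: matrix_mul_assoc)
  also have "\<dots> = X ** transpose X ** transpose A" using x3
    by (metis matrix_mul_assoc matrix_transpose_mul)
  also have "\<dots> = X ** transpose X ** transpose (A ** Y ** A)" using y1 by simp
  also have "\<dots> = X ** transpose (A ** X) ** transpose (A ** Y)"
    by (simp add: matrix_transpose_mul matrix_mul_assoc)
  also have "\<dots> = (X ** A ** X) ** A ** Y" using x3 y3 by (simp add: matrix_mul_assoc)
  also have "\<dots> = X ** A ** Y" using x2 by simp
  finally have ex: "X = X ** A ** Y" .
  have "Y = (Y ** A) ** Y" using y2 by (simp add: matrix_mul_assoc)
  also have "\<dots> = transpose A ** transpose Y ** Y" using y4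
    by (metis matrix_transpose_mul)
  also have "\<dots> = transpose (A ** X ** A) ** transpose Y ** Y" using x1 by simp
  also have "\<dots> = transpose (X ** A) ** transpose (Y ** A) ** Y"
    by (simp add: matrix_transpose_mul matrix_mul_assoc)
  also have "\<dots> = X ** A ** (Y ** A ** Y)" using x4 y4 by (simp add: matrix_mul_assoc)
  also have "\<dots> = X ** A ** Y" using y2 by simp
  finally show ?thesis using ex by simp
qed

lemma pen_mp: "pen A (mp_pinv A)"
proof -
  have "\<exists>!X. pen A X" using pinv_exists[of A] pen_unique unfolding pen_def by blast
  then show ?thesis unfolding mp_pinv_def pen_def[symmetric] by (rule theI')
qed

lemma pinv_transpose: "mp_pinv (transpose A) = transpose (mp_pinv A)"
proof -
  have "pen (transpose A) (transpose (mp_pinv A))"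
    using pen_mp[of A] unfolding pen_def
    by (metis matrix_transpose_mul matrix_mul_assoc transpose_transpose)
  then show ?thesis using pen_unique pen_mp by blast
qed

lemma trace_tsym: "trace (transpose U ** V) = trace (transpose V ** (U::real^'m^'n))"
  by (metis matrix_transpose_mul trace_transpose transpose_transpose)

theorem theorem3:
  fixes A :: "real^'n^'n" and Xk :: "real^'n^'n" and S :: "real^'t^'n"
  assumes symA: "transpose A = A"
  shows
   "{X. is_arg_min (\<lambda>X. frob X ^ 2 / 2) (\<lambda>X. A ** X ** A = A) X}
      = {X. \<exists>\<Gamma>::real^'n^'n. is_arg_min (\<lambda>(G, Y). frob (mp_pinv A - Y) ^ 2 / 2)
                               (\<lambda>(G, Y). Y = A ** G ** A) (\<Gamma>, X)}
    \<and> {X. is_arg_min (\<lambda>X. frob (X - Xk) ^ 2 / 2)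
                      (\<lambda>X. transpose S ** A ** X ** A ** S = transpose S ** A ** S) X}
      = {X. \<exists>\<Gamma>::real^'t^'t. is_arg_min (\<lambda>(G, Y). frob (Y - mp_pinv A) ^ 2 / 2)
                               (\<lambda>(G, Y). Y = Xk + A ** S ** G ** transpose S ** A) (\<Gamma>, X)}
    \<and> {X. is_arg_min (\<lambda>X. frob (X - Xk) ^ 2 / 2)
                      (\<lambda>X. transpose S ** A ** X ** A ** S = transpose S ** A ** S) X}
      = {Xk + A ** S ** mp_pinv (transpose S ** A ** A ** S) ** transpose S
              ** (A - A ** Xk ** A) ** S ** mp_pinv (transpose S ** A ** A ** S)
              ** transpose S ** A}"
proof -
  define D where "D = mp_pinv A"
  have pD: "pen A D" by (simp add: D_def pen_mp)
  then have d1: "A ** D ** A = A" and d2: "D ** A ** D = D" and d3: "transpose (A ** D) = A ** D"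
    by (auto simp: pen_def)
  have Dsym: "transpose D = D" using pinv_transpose[of A] symA D_def by simp
  have comm: "A ** D = D ** A" using d3 by (simp add: matrix_transpose_mul Dsym symA)
  define M where "M = D ** D ** D"
  have AMA: "A ** M ** A = D"
  proof -
    have "A ** M ** A = (A ** D) ** D ** (D ** A)" by (simp add: M_def matrix_mul_assoc)
    also have "\<dots> = (D ** A) ** D ** (A ** D)" by (simp add: comm)
    also have "\<dots> = D ** (A ** D ** A) ** D" by (simp add: matrix_mul_assoc)
    also have "\<dots> = D" using d1 d2 by simp
    finally show ?thesis .
  qed
  have key1: "frob X ^ 2 / 2 = frob D ^ 2 / 2 + nsq (X - D) / 2" if "A ** X ** A = A" for X
  proof -
    have e: "transpose A ** (X - D) ** A = 0"
      using that d1 symA by (simp add: mm_sub_ldistrib mm_sub_rdistrib)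
    have "trace (transpose (X - D) ** (A ** M ** transpose A)) = 0" by (rule orth[OF e])
    then have c: "trace (transpose D ** (X - D)) = 0" using AMA symA trace_tsym by metis
    have "nsq X = nsq D + nsq (X - D)" using c nsq_add[of D "X - D"] by simp
    then show ?thesis by (simp add: frob_sq)
  qed
  have L1: "is_arg_min (\<lambda>X. frob X ^ 2 / 2) (\<lambda>X. A ** X ** A = A) X \<longleftrightarrow>
        A ** X ** A = A \<and> nsq (X - D) / 2 = 0" for X
    by (rule argmin_gen[where q=D and h="\<lambda>X. nsq (X - D) / 2"]) (simp add: d1, erule key1, simp add: nsq_nonneg)
  have S1: "{X. is_arg_min (\<lambda>X. frob X ^ 2 / 2) (\<lambda>X. A ** X ** A = A) X} = {D}"
    using L1 d1 by (auto simp: nsq_eq_0)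
  have L2: "is_arg_min (\<lambda>(G, Y). frob (D - Y) ^ 2 / 2) (\<lambda>(G, Y). Y = A ** G ** A) p \<longleftrightarrow>
        (\<lambda>(G, Y). Y = A ** G ** A) p \<and> (\<lambda>(G, Y). frob (D - Y) ^ 2 / 2) p = 0"
    for p :: "(real^'n^'n) \<times> (real^'n^'n)"
    by (rule argmin_gen[where q="(M, D)" and h="\<lambda>(G, Y). frob (D - Y) ^ 2 / 2"]) (auto simp: AMA frob_sq nsq_nonneg nsq_eq_0)
  have S2: "{X. \<exists>\<Gamma>::real^'n^'n. is_arg_min (\<lambda>(G, Y). frob (D - Y) ^ 2 / 2)
                               (\<lambda>(G, Y). Y = A ** G ** A) (\<Gamma>, X)} = {D}"
    using L2 AMA by (auto simp: frob_sq nsq_eq_0)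
  define B where "B = A ** S"
  have tAS: "transpose (A ** S) = transpose S ** A" using symA by (simp add: matrix_transpose_mul)
  have tB: "transpose B = transpose S ** A" by (simp add: B_def tAS)
  define Q where "Q = transpose B ** B"
  have Qe: "transpose S ** A ** A ** S = Q" by (simp add: Q_def B_def tAS matrix_mul_assoc)
  define P where "P = mp_pinv Q"
  have Qsym: "transpose Q = Q" by (simp add: Q_def matrix_transpose_mul)
  have Psym: "transpose P = P" using pinv_transpose[of Q] Qsym P_def by simp
  have q1: "Q ** P ** Q = Q" using pen_mp[of Q] by (simp add: pen_def P_def)
  have q1': "W ** Q ** P ** Q = W ** Q" for W :: "real^'t^('a::finite)"
    using q1 by (simp add: matrix_mul_assoc[symmetric])
  have bb: "W ** transpose B ** B = W ** Q" for W :: "real^'t^('a::finite)"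
    by (simp add: Q_def matrix_mul_assoc)
  have bb0: "transpose B ** B = Q" by (simp add: Q_def)
  have BPQ: "B ** P ** Q = B"
  proof -
    define Z where "Z = B ** P ** Q - B"
    have tZ: "transpose Z = Q ** P ** transpose B - transpose B"
      by (simp add: Z_def transpose_diff matrix_transpose_mul Qsym Psym matrix_mul_assoc)
    have "transpose Z ** Z = 0"
      unfolding tZ by (simp add: Z_def mm_sub_ldistrib mm_sub_rdistrib matrix_mul_assoc bb bb0 q1 q1')
    then have "nsq Z = 0" by (simp add: nsq_def trace_def)
    then show ?thesis by (simp add: nsq_eq_0 Z_def)
  qed
  have QPB: "Q ** P ** transpose B = transpose B"
    using arg_cong[OF BPQ, of transpose] by (simp add: matrix_transpose_mul Qsym Psym matrix_mul_assoc)
  have BPQ': "W ** B ** P ** Q = W ** B" for W :: "real^'n^('a::finite)"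
    using BPQ by (simp add: matrix_mul_assoc[symmetric])
  have QPB': "W ** Q ** P ** transpose B = W ** transpose B" for W :: "real^'t^('a::finite)"
    using QPB by (simp add: matrix_mul_assoc[symmetric])
  have d1': "W ** A ** D ** A = W ** A" for W :: "real^'n^('a::finite)"
    using d1 by (simp add: matrix_mul_assoc[symmetric])
  have SAS: "transpose S ** A ** S = transpose B ** D ** B"
    by (simp add: B_def tAS matrix_mul_assoc d1')
  have cons: "transpose S ** A ** X ** A ** S = transpose B ** X ** B" for X
    by (simp add: B_def tAS matrix_mul_assoc)
  have cr: "A ** S ** G ** transpose S ** A = B ** G ** transpose B" for G
    by (simp add: B_def tAS matrix_mul_assoc)
  define Gs where "Gs = P ** (transpose B ** (D - Xk) ** B) ** P"
  define Xs where "Xs = Xk + B ** Gs ** transpose B"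
  have R: "transpose S ** (A - A ** Xk ** A) ** S = transpose B ** (D - Xk) ** B"
    by (simp add: mm_sub_ldistrib mm_sub_rdistrib SAS[symmetric] cons[symmetric] matrix_mul_assoc d1')
  have formula: "Xk + A ** S ** mp_pinv (transpose S ** A ** A ** S) ** transpose S
              ** (A - A ** Xk ** A) ** S ** mp_pinv (transpose S ** A ** A ** S)
              ** transpose S ** A = Xs"
  proof -
    have "A ** S ** mp_pinv (transpose S ** A ** A ** S) ** transpose S
              ** (A - A ** Xk ** A) ** S ** mp_pinv (transpose S ** A ** A ** S)
              ** transpose S ** A = B ** (P ** (transpose S ** (A - A ** Xk ** A) ** S) ** P) ** transpose B"
      by (simp only: Qe P_def[symmetric] B_def tAS matrix_mul_assoc)
    then show ?thesis by (simp add: R Xs_def Gs_def)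
  qed
  have feas: "transpose B ** Xs ** B = transpose B ** D ** B"
    by (simp add: Xs_def Gs_def matrix_add_ldistrib mm_add_rdistrib mm_sub_ldistrib mm_sub_rdistrib
        matrix_mul_assoc bb bb0 QPB QPB' BPQ' BPQ)
  have key2: "frob (X - Xk) ^ 2 / 2 = frob (Xs - Xk) ^ 2 / 2 + nsq (X - Xs) / 2"
    if "transpose B ** X ** B = transpose B ** D ** B" for X
  proof -
    have e: "transpose B ** (X - Xs) ** B = 0"
      using that feas by (simp add: mm_sub_ldistrib mm_sub_rdistrib)
    have c: "trace (transpose (X - Xs) ** (B ** Gs ** transpose B)) = 0" by (rule orth[OF e])
    have eq: "X - Xk = (X - Xs) + B ** Gs ** transpose B" by (simp add: Xs_def)
    have "nsq (X - Xk) = nsq (X - Xs) + nsq (B ** Gs ** transpose B)"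
      unfolding eq using c nsq_add[of "X - Xs" "B ** Gs ** transpose B"] by linarith
    moreover have "Xs - Xk = B ** Gs ** transpose B" by (simp add: Xs_def)
    ultimately show ?thesis by (simp add: frob_sq)
  qed
  have L3: "is_arg_min (\<lambda>X. frob (X - Xk) ^ 2 / 2)
                      (\<lambda>X. transpose S ** A ** X ** A ** S = transpose S ** A ** S) X \<longleftrightarrow>
        transpose S ** A ** X ** A ** S = transpose S ** A ** S \<and> nsq (X - Xs) / 2 = 0" for X
    by (rule argmin_gen[where q=Xs and h="\<lambda>X. nsq (X - Xs) / 2"])
      (simp add: cons SAS feas, metis cons SAS key2, simp add: nsq_nonneg)
  have S3: "{X. is_arg_min (\<lambda>X. frob (X - Xk) ^ 2 / 2)
                      (\<lambda>X. transpose S ** A ** X ** A ** S = transpose S ** A ** S) X} = {Xs}"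
    using L3 feas by (auto simp: nsq_eq_0 cons SAS)
  have key3: "frob (Y - D) ^ 2 / 2 = frob (Xs - D) ^ 2 / 2 + nsq (Y - Xs) / 2"
    if "Y = Xk + B ** G ** transpose B" for Y G
  proof -
    have e: "transpose B ** (Xs - D) ** B = 0"
      using feas by (simp add: mm_sub_ldistrib mm_sub_rdistrib)
    have c: "trace (transpose (Xs - D) ** (B ** (G - Gs) ** transpose B)) = 0" by (rule orth[OF e])
    have eq: "Y - D = (Xs - D) + B ** (G - Gs) ** transpose B"
      by (simp add: that Xs_def mm_sub_ldistrib mm_sub_rdistrib)
    have "nsq (Y - D) = nsq (Xs - D) + nsq (B ** (G - Gs) ** transpose B)"
      unfolding eq using c nsq_add[of "Xs - D" "B ** (G - Gs) ** transpose B"] by linarith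
    moreover have "Y - Xs = B ** (G - Gs) ** transpose B"
      by (simp add: that Xs_def mm_sub_ldistrib mm_sub_rdistrib)
    ultimately show ?thesis by (simp add: frob_sq)
  qed
  have L4: "is_arg_min (\<lambda>(G, Y). frob (Y - D) ^ 2 / 2)
              (\<lambda>(G, Y). Y = Xk + A ** S ** G ** transpose S ** A) p \<longleftrightarrow>
        (\<lambda>(G, Y). Y = Xk + A ** S ** G ** transpose S ** A) p \<and> (\<lambda>(G, Y). nsq (Y - Xs) / 2) p = 0"
    for p :: "(real^'t^'t) \<times> (real^'n^'n)"
    apply (rule argmin_gen[where q="(Gs, Xs)" and h="\<lambda>(G, Y). nsq (Y - Xs) / 2"])
      apply (simp add: cr Xs_def)
     apply (clarify, rule key3, simp add: cr)
    apply (simp add: nsq_nonneg split: prod.splits)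
    done
  have S4: "{X. \<exists>\<Gamma>::real^'t^'t. is_arg_min (\<lambda>(G, Y). frob (Y - D) ^ 2 / 2)
                               (\<lambda>(G, Y). Y = Xk + A ** S ** G ** transpose S ** A) (\<Gamma>, X)} = {Xs}"
    using L4 by (auto simp: cr nsq_eq_0 Xs_def)
  show ?thesis using S1 S2 S3 S4 formula unfolding D_def by simp
qed

end
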